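(* For a path connected space $X$ with basepoint $x_0$, the following are equivalent: (1) $\pi_1^{\tau}(X,x_0)$ is discrete; (2) $\pi_1^{qtop}(X,x_0)$ is discrete; (3) every null-homotopic loop $\alpha\in\Omega(X,x_0)$ has an open neighborhood in $\Omega(X,x_0)$ containing only null-homotopic loops.
   Context: $\Omega(X,x_0)$ is the space of loops at $x_0$ with the compact-open topology; $\pi_1^{qtop}(X,x_0)$ is $\pi_1(X,x_0)$ with the quotient topology via $\alpha\mapsto[\alpha]$. $F_M(S)$ is the free (Markov) topological group on a space $S$. For a group with topology $G$, $\tau(G)$ is $G$ with the quotient topology with respect to the multiplication epimorphism $m_G:F_M(G)\to G$ (generator $g\mapsto g$). $\pi_1^{\tau}=\tau\circ\pi_1^{qtop}$. *)

theory Defs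
  imports "HOL-Analysis.Analysis"
begin

definition quotient_top :: "'a topology \<Rightarrow> ('a \<Rightarrow> 'b) \<Rightarrow> 'b set \<Rightarrow> 'b topology" where
  "quotient_top T f Y = topology (\<lambda>U. U \<subseteq> Y \<and> openin T {x \<in> topspace T. f x \<in> U})"

definition is_discrete :: "'a topology \<Rightarrow> bool" where
  "is_discrete T \<longleftrightarrow> T = discrete_topology (topspace T)"

text \<open>Loops are parametrised on [0,1]; to have a genuine function space we normalise
  them to be extensional (value undefined) outside [0,1].\<close>
definition loops :: "'a topology \<Rightarrow> 'a \<Rightarrow> (real \<Rightarrow> 'a) set" where
  "loops X x0 = {g. pathin X g \<and> g 0 = x0 \<and> g 1 = x0 \<and> g \<in> extensional {0..1}}"

definition loop_space :: "'a topology \<Rightarrow> 'a \<Rightarrow> (real \<Rightarrow> 'a) topology" where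
  "loop_space X x0 = topology_generated_by
     {{g \<in> loops X x0. g ` K \<subseteq> U} | K U. compact K \<and> K \<subseteq> {0..1} \<and> openin X U}"

definition const_loop :: "'a \<Rightarrow> real \<Rightarrow> 'a" where
  "const_loop x0 = restrict (\<lambda>t. x0) {0..1}"

definition homotopic_rel_ends :: "'a topology \<Rightarrow> 'a \<Rightarrow> (real \<Rightarrow> 'a) \<Rightarrow> (real \<Rightarrow> 'a) \<Rightarrow> bool" where
  "homotopic_rel_ends X x0 p q =
     homotopic_with (\<lambda>r. r 0 = x0 \<and> r 1 = x0) (top_of_set {0..1}) X p q"

definition loop_class :: "'a topology \<Rightarrow> 'a \<Rightarrow> (real \<Rightarrow> 'a) \<Rightarrow> (real \<Rightarrow> 'a) set" where
  "loop_class X x0 p = {q \<in> loops X x0. homotopic_rel_ends X x0 p q}"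

definition loop_join :: "(real \<Rightarrow> 'a) \<Rightarrow> (real \<Rightarrow> 'a) \<Rightarrow> real \<Rightarrow> 'a" where
  "loop_join p q = restrict (\<lambda>t. if t \<le> 1/2 then p (2*t) else q (2*t - 1)) {0..1}"

definition loop_rev :: "(real \<Rightarrow> 'a) \<Rightarrow> real \<Rightarrow> 'a" where
  "loop_rev p = restrict (\<lambda>t. p (1 - t)) {0..1}"

definition pi1_carrier :: "'a topology \<Rightarrow> 'a \<Rightarrow> (real \<Rightarrow> 'a) set set" where
  "pi1_carrier X x0 = loop_class X x0 ` loops X x0"

definition pi1_qtop :: "'a topology \<Rightarrow> 'a \<Rightarrow> (real \<Rightarrow> 'a) set topology" where
  "pi1_qtop X x0 = quotient_top (loop_space X x0) (loop_class X x0) (pi1_carrier X x0)"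

definition pi1_mult :: "'a topology \<Rightarrow> 'a \<Rightarrow> (real \<Rightarrow> 'a) set \<Rightarrow> (real \<Rightarrow> 'a) set \<Rightarrow> (real \<Rightarrow> 'a) set" where
  "pi1_mult X x0 A B = loop_class X x0 (loop_join (SOME p. p \<in> A) (SOME q. q \<in> B))"

definition pi1_inv :: "'a topology \<Rightarrow> 'a \<Rightarrow> (real \<Rightarrow> 'a) set \<Rightarrow> (real \<Rightarrow> 'a) set" where
  "pi1_inv X x0 A = loop_class X x0 (loop_rev (SOME p. p \<in> A))"

definition pi1_one :: "'a topology \<Rightarrow> 'a \<Rightarrow> (real \<Rightarrow> 'a) set" where
  "pi1_one X x0 = loop_class X x0 (const_loop x0)"

text \<open>A letter (x, True) stands for x, (x, False) for x^{-1}.\<close>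
fun reduced :: "('g \<times> bool) list \<Rightarrow> bool" where
  "reduced [] = True"
| "reduced [a] = True"
| "reduced (a # b # w) = (\<not> (fst a = fst b \<and> snd a \<noteq> snd b) \<and> reduced (b # w))"

fun red_cons :: "('g \<times> bool) \<Rightarrow> ('g \<times> bool) list \<Rightarrow> ('g \<times> bool) list" where
  "red_cons a [] = [a]"
| "red_cons a (b # w) = (if fst a = fst b \<and> snd a \<noteq> snd b then w else a # b # w)"

definition fg_carrier :: "'g set \<Rightarrow> ('g \<times> bool) list set" where
  "fg_carrier S = {w. fst ` set w \<subseteq> S \<and> reduced w}"

definition fg_mult :: "('g \<times> bool) list \<Rightarrow> ('g \<times> bool) list \<Rightarrow> ('g \<times> bool) list" where
  "fg_mult u v = foldr red_cons u v"

definition fg_inv :: "('g \<times> bool) list \<Rightarrow> ('g \<times> bool) list" where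
  "fg_inv w = rev (map (\<lambda>(x, b). (x, \<not> b)) w)"

definition group_topology :: "'g set \<Rightarrow> ('g \<Rightarrow> 'g \<Rightarrow> 'g) \<Rightarrow> ('g \<Rightarrow> 'g) \<Rightarrow> 'g topology \<Rightarrow> bool" where
  "group_topology C mul iv T \<longleftrightarrow> topspace T = C \<and>
     continuous_map (prod_topology T T) T (\<lambda>(x, y). mul x y) \<and> continuous_map T T iv"

text \<open>Free (Markov) topological group F_M(S): the free group on the points of S with the
  finest group topology making the generator map x \<mapsto> x continuous (the join of all such
  group topologies).\<close>
definition markov_topology :: "'g topology \<Rightarrow> ('g \<times> bool) list topology" where
  "markov_topology S = topology_generated_by
     (\<Union>{{W. openin T W} | T. group_topology (fg_carrier (topspace S)) fg_mult fg_inv T \<and>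
                               continuous_map S T (\<lambda>x. [(x, True)])})"

definition word_eval :: "('g \<Rightarrow> 'g \<Rightarrow> 'g) \<Rightarrow> ('g \<Rightarrow> 'g) \<Rightarrow> 'g \<Rightarrow> ('g \<times> bool) list \<Rightarrow> 'g" where
  "word_eval mul iv one w = foldr (\<lambda>(x, b) acc. mul (if b then x else iv x) acc) w one"

text \<open>tau(G): G with the quotient topology w.r.t. the multiplication map m_G : F_M(G) \<rightarrow> G.\<close>
definition tau_top :: "'g topology \<Rightarrow> ('g \<Rightarrow> 'g \<Rightarrow> 'g) \<Rightarrow> ('g \<Rightarrow> 'g) \<Rightarrow> 'g \<Rightarrow> 'g topology" where
  "tau_top G mul iv one = quotient_top (markov_topology G) (word_eval mul iv one) (topspace G)"

definition pi1_tau :: "'a topology \<Rightarrow> 'a \<Rightarrow> (real \<Rightarrow> 'a) set topology" where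
  "pi1_tau X x0 = tau_top (pi1_qtop X x0) (pi1_mult X x0) (pi1_inv X x0) (pi1_one X x0)"

end

theory Submission
  imports Defs
begin


lemma cm_real:
  "continuous_on S f \<Longrightarrow> f ` S \<subseteq> T \<Longrightarrow> continuous_map (top_of_set S) (top_of_set T) f"
  by (simp add: continuous_map_in_subtopology image_subset_iff_funcset)

lemma mk_hom:
  fixes K :: "real \<times> real \<Rightarrow> 'a" and p q :: "real \<Rightarrow> 'a"
  assumes K: "continuous_map (top_of_set ({0..1::real} \<times> {0..1::real})) X K"
    and K0: "\<And>t. t \<in> {0..1} \<Longrightarrow> K (0, t) = p t"
    and K1: "\<And>t. t \<in> {0..1} \<Longrightarrow> K (1, t) = q t"
    and Ka: "\<And>s. s \<in> {0..1} \<Longrightarrow> K (s, 0) = x0"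
    and Kb: "\<And>s. s \<in> {0..1} \<Longrightarrow> K (s, 1) = x0"
  shows "homotopic_rel_ends X x0 p q"
  unfolding homotopic_rel_ends_def homotopic_with_def
proof (intro exI conjI allI ballI)
  let ?h = "\<lambda>(s::real, t::real). if s = 0 then p t else if s = 1 then q t else K (s, t)"
  show "continuous_map (prod_topology (top_of_set {0..1}) (top_of_set {0..1})) X ?h"
    unfolding prod_topology_subtopology_eu by (rule continuous_map_eq[OF K]) (auto simp: K0 K1)
qed (use K0[of 0] K0[of 1] K1[of 0] K1[of 1] Ka Kb in auto)

lemma loopsD:
  assumes "g \<in> loops X x0"
  shows "pathin X g" "g 0 = x0" "g 1 = x0" "g \<in> extensional {0..1}"
  using assms by (auto simp: loops_def)

lemma loop_cm: "g \<in> loops X x0 \<Longrightarrow> continuous_map (top_of_set {0..1}) X g"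
  by (auto simp: loops_def pathin_def)

lemma hom_refl: "g \<in> loops X x0 \<Longrightarrow> homotopic_rel_ends X x0 g g"
  by (auto simp: homotopic_rel_ends_def loops_def pathin_def)

lemma hom_sym: "homotopic_rel_ends X x0 p q \<Longrightarrow> homotopic_rel_ends X x0 q p"
  unfolding homotopic_rel_ends_def by (rule homotopic_with_symD)

lemma hom_trans: "homotopic_rel_ends X x0 p q \<Longrightarrow> homotopic_rel_ends X x0 q r \<Longrightarrow> homotopic_rel_ends X x0 p r"
  unfolding homotopic_rel_ends_def by (rule homotopic_with_trans)

lemma hom_get:
  fixes p q :: "real \<Rightarrow> 'a"
  assumes "homotopic_rel_ends X x0 p q"
  obtains H where "continuous_map (top_of_set ({0..1::real} \<times> {0..1::real})) X H"
    "\<And>t. H (0, t) = p t" "\<And>t. H (1, t) = q t"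
    "\<And>s. s \<in> {0..1} \<Longrightarrow> H (s, 0) = x0" "\<And>s. s \<in> {0..1} \<Longrightarrow> H (s, 1) = x0"
proof -
  obtain h where h: "continuous_map (top_of_set ({0..1::real} \<times> {0..1::real})) X h" "\<forall>x. h(0,x) = p x"
    "\<forall>x. h(1,x) = q x" "\<forall>t\<in>{0..1::real}. h (t,0) = x0 \<and> h(t,1) = x0"
    using assms unfolding homotopic_rel_ends_def homotopic_with_def prod_topology_subtopology_eu
    by blast
  show ?thesis using that[of h] h by auto
qed

lemma half2: "(b::real) * 2 = 1 \<Longrightarrow> b = 1/2" by simp

lemma join_hom:
  fixes p p' q q' :: "real \<Rightarrow> 'a"
  assumes hp: "homotopic_rel_ends X x0 p p'" and hq: "homotopic_rel_ends X x0 q q'"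
  shows "homotopic_rel_ends X x0 (loop_join p q) (loop_join p' q')"
proof -
  obtain P :: "real \<times> real \<Rightarrow> 'a" where P: "continuous_map (top_of_set ({0..1::real} \<times> {0..1::real})) X P"
    "\<And>t. P (0, t) = p t" "\<And>t. P (1, t) = p' t"
    "\<And>s. s \<in> {0..1} \<Longrightarrow> P (s, 0) = x0" "\<And>s. s \<in> {0..1} \<Longrightarrow> P (s, 1) = x0"
    using hom_get[OF hp] by blast
  obtain Q :: "real \<times> real \<Rightarrow> 'a" where Q: "continuous_map (top_of_set ({0..1::real} \<times> {0..1::real})) X Q"
    "\<And>t. Q (0, t) = q t" "\<And>t. Q (1, t) = q' t"
    "\<And>s. s \<in> {0..1} \<Longrightarrow> Q (s, 0) = x0" "\<And>s. s \<in> {0..1} \<Longrightarrow> Q (s, 1) = x0"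
    using hom_get[OF hq] by blast
  let ?S = "{0..1::real} \<times> {0..1::real}"
  let ?K = "\<lambda>x. if snd x \<le> 1/2 then (P \<circ> (\<lambda>x. (fst x, 2 * snd x))) x
               else (Q \<circ> (\<lambda>x. (fst x, 2 * snd x - 1))) x"
  have c1: "continuous_map (top_of_set (?S \<inter> {x. snd x \<le> 1/2})) X (P \<circ> (\<lambda>x. (fst x, 2 * snd x)))"
    by (rule continuous_map_compose[OF cm_real P(1)]) (auto intro!: continuous_intros)
  have c2: "continuous_map (top_of_set (?S \<inter> {x. 1/2 \<le> snd x})) X (Q \<circ> (\<lambda>x. (fst x, 2 * snd x - 1)))"
    by (rule continuous_map_compose[OF cm_real Q(1)]) (auto intro!: continuous_intros)
  have K: "continuous_map (top_of_set ?S) X ?K"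
  proof (rule continuous_map_cases_le)
    show "continuous_map (top_of_set ?S) euclideanreal snd"
      by (simp add: continuous_on_snd)
    show "continuous_map (top_of_set ?S) euclideanreal (\<lambda>x. 1/2)" by simp
    show "continuous_map (subtopology (top_of_set ?S) {x \<in> topspace (top_of_set ?S). snd x \<le> 1/2}) X
        (P \<circ> (\<lambda>x. (fst x, 2 * snd x)))"
      using c1 by (simp add: subtopology_subtopology Collect_conj_eq Int_assoc)
    show "continuous_map (subtopology (top_of_set ?S) {x \<in> topspace (top_of_set ?S). 1/2 \<le> snd x}) X
        (Q \<circ> (\<lambda>x. (fst x, 2 * snd x - 1)))"
      using c2 by (simp add: subtopology_subtopology Collect_conj_eq Int_assoc)
  next
    fix x assume x: "x \<in> topspace (top_of_set ?S)" "snd x = 1/2"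
    then have "2 * snd x = 1" "2 * snd x - 1 = 0" "fst x \<in> {0..1}" by auto
    then show "(P \<circ> (\<lambda>x. (fst x, 2 * snd x))) x = (Q \<circ> (\<lambda>x. (fst x, 2 * snd x - 1))) x"
      by (simp add: P Q)
  qed
  show ?thesis
  proof (rule mk_hom[OF K])
  qed (auto simp: loop_join_def P Q)
qed

lemma join_loops:
  assumes "p \<in> loops X x0" "q \<in> loops X x0"
  shows "loop_join p q \<in> loops X x0"
proof -
  have "homotopic_rel_ends X x0 (loop_join p q) (loop_join p q)"
    by (intro join_hom hom_refl assms)
  then have "continuous_map (top_of_set {0..1}) X (loop_join p q)"
    unfolding homotopic_rel_ends_def by (rule homotopic_with_imp_continuous_maps[THEN conjunct1])
  then show ?thesis using loopsD[OF assms(1)] loopsD[OF assms(2)]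
    by (auto simp: loops_def pathin_def loop_join_def)
qed

lemma rev_loops:
  assumes "p \<in> loops X x0"
  shows "loop_rev p \<in> loops X x0"
proof -
  have "continuous_map (top_of_set {0..1}) X (p \<circ> (\<lambda>t. 1 - t))"
    by (rule continuous_map_compose[OF cm_real loop_cm[OF assms]]) (auto intro!: continuous_intros)
  then have "continuous_map (top_of_set {0..1}) X (loop_rev p)"
    by (rule continuous_map_eq) (auto simp: loop_rev_def)
  then show ?thesis using loopsD[OF assms]
    by (auto simp: loops_def pathin_def loop_rev_def)
qed

lemma const_loops: "x0 \<in> topspace X \<Longrightarrow> const_loop x0 \<in> loops X x0"
proof -
  assume x0: "x0 \<in> topspace X"
  have "continuous_map (top_of_set {0..1}) X (\<lambda>t. x0)" using x0 by simp
  then have "continuous_map (top_of_set {0..1}) X (const_loop x0)"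
    by (rule continuous_map_eq) (auto simp: const_loop_def)
  then show ?thesis by (auto simp: loops_def pathin_def const_loop_def)
qed

lemma right_unit:
  assumes p: "p \<in> loops X x0"
  shows "homotopic_rel_ends X x0 (loop_join p (const_loop x0)) p"
proof -
  let ?S = "{0..1::real} \<times> {0..1::real}"
  let ?s = "\<lambda>x::real\<times>real. (1 - fst x) * min (2 * snd x) 1 + fst x * snd x"
  have sS: "?s x \<in> {0..1}" if xS: "x \<in> ?S" for x
  proof -
    obtain a b where x: "x = (a,b)" "0 \<le> a" "a \<le> 1" "0 \<le> b" "b \<le> 1" using xS by (cases x) auto
    have "0 \<le> (1 - a) * min (2 * b) 1" "0 \<le> a * b" using x by auto
    moreover have "(1 - a) * min (2 * b) 1 \<le> (1 - a) * 1" "a * b \<le> a * 1"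
      using x by (intro mult_left_mono; auto)+
    ultimately show ?thesis using x by auto
  qed
  have K: "continuous_map (top_of_set ?S) X (p \<circ> ?s)"
    by (rule continuous_map_compose[OF cm_real loop_cm[OF p]]) (use sS in \<open>auto intro!: continuous_intros\<close>)
  show ?thesis
  proof (rule mk_hom[OF K])
    fix t :: real assume t: "t \<in> {0..1}"
    show "(p \<circ> ?s) (0, t) = loop_join p (const_loop x0) t"
      using t loopsD[OF p] by (auto simp: loop_join_def const_loop_def min_def)
  qed (use loopsD[OF p] in auto)
qed

lemma right_inv:
  assumes p: "p \<in> loops X x0"
  shows "homotopic_rel_ends X x0 (loop_join p (loop_rev p)) (const_loop x0)"
proof -
  let ?S = "{0..1::real} \<times> {0..1::real}"
  let ?s = "\<lambda>x::real\<times>real. (1 - fst x) * min (2 * snd x) (2 - 2 * snd x)"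
  have sS: "?s x \<in> {0..1}" if xS: "x \<in> ?S" for x
  proof -
    obtain a b where x: "x = (a,b)" "0 \<le> a" "a \<le> 1" "0 \<le> b" "b \<le> 1" using xS by (cases x) auto
    have "0 \<le> (1 - a) * min (2 * b) (2 - 2 * b)" using x by auto
    moreover have "(1 - a) * min (2 * b) (2 - 2 * b) \<le> 1 * 1"
      using x by (intro mult_mono; auto)
    ultimately show ?thesis using x by auto
  qed
  have K: "continuous_map (top_of_set ?S) X (p \<circ> ?s)"
    by (rule continuous_map_compose[OF cm_real loop_cm[OF p]]) (use sS in \<open>auto intro!: continuous_intros\<close>)
  show ?thesis
  proof (rule mk_hom[OF K])
    fix t :: real assume t: "t \<in> {0..1}"
    show "(p \<circ> ?s) (0, t) = loop_join p (loop_rev p) t"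
      using t loopsD[OF p] by (auto simp: loop_join_def loop_rev_def min_def)
  qed (use loopsD[OF p] in \<open>auto simp: const_loop_def\<close>)
qed

lemma cancel_hom:
  fixes g b :: "real \<Rightarrow> 'a"
  assumes g: "g \<in> loops X x0" and b: "b \<in> loops X x0"
    and h: "homotopic_rel_ends X x0 (loop_join g (loop_rev b)) (const_loop x0)"
  shows "homotopic_rel_ends X x0 g b"
proof -
  obtain H :: "real \<times> real \<Rightarrow> 'a" where H: "continuous_map (top_of_set ({0..1::real} \<times> {0..1::real})) X H"
    "\<And>t. H (0, t) = loop_join g (loop_rev b) t" "\<And>t. H (1, t) = const_loop x0 t"
    "\<And>s. s \<in> {0..1} \<Longrightarrow> H (s, 0) = x0" "\<And>s. s \<in> {0..1} \<Longrightarrow> H (s, 1) = x0"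
    using hom_get[OF h] by blast
  let ?S = "{0..1::real} \<times> {0..1::real}"
  let ?s = "\<lambda>x::real\<times>real. ((1 - snd x) * min (3 * fst x) (min 1 (3 - 3 * fst x)),
              snd x / 2 + (1 - snd x) * max 0 (min 1 (3 * fst x - 1)))"
  have sS: "?s x \<in> ?S" if xS: "x \<in> ?S" for x
  proof -
    obtain u t where x: "x = (u,t)" "0 \<le> u" "u \<le> 1" "0 \<le> t" "t \<le> 1" using xS by (cases x) auto
    have m1: "0 \<le> min (3 * u) (min 1 (3 - 3 * u))" "min (3 * u) (min 1 (3 - 3 * u)) \<le> 1" using x by auto
    have m2: "0 \<le> max 0 (min 1 (3 * u - 1))" "max 0 (min 1 (3 * u - 1)) \<le> 1" by auto
    have "0 \<le> (1 - t) * min (3 * u) (min 1 (3 - 3 * u))" using x m1 by auto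
    moreover have "(1 - t) * min (3 * u) (min 1 (3 - 3 * u)) \<le> 1 * 1" using x m1 by (intro mult_mono) auto
    moreover have "0 \<le> (1 - t) * max 0 (min 1 (3 * u - 1))" using x m2 by auto
    moreover have "(1 - t) * max 0 (min 1 (3 * u - 1)) \<le> (1 - t) * 1" using x m2 by (intro mult_left_mono) auto
    ultimately show ?thesis using x by auto
  qed
  have K: "continuous_map (top_of_set ?S) X (H \<circ> ?s)"
    by (rule continuous_map_compose[OF cm_real H(1)]) (use sS in \<open>auto intro!: continuous_intros\<close>)
  note gl = loopsD[OF g] and bl = loopsD[OF b]
  show ?thesis
  proof (rule mk_hom[OF K])
    fix t :: real assume t: "t \<in> {0..1}"
    show "(H \<circ> ?s) (0, t) = g t"
      using t by (auto simp: H loop_join_def)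
    show "(H \<circ> ?s) (1, t) = b t"
    proof (cases "t = 1")
      case True then show ?thesis using gl bl by (auto simp: H loop_join_def)
    next
      case False
      then have "?s (1,t) = (0, 1 - t/2)" by auto
      moreover have "\<not> 1 - t/2 \<le> 1/2" using t False by auto
      ultimately show ?thesis using t by (auto simp: H loop_join_def loop_rev_def)
    qed
  next
    fix u :: real assume u: "u \<in> {0..1}"
    show "(H \<circ> ?s) (u, 1) = x0"
      using gl by (auto simp: H loop_join_def)
    show "(H \<circ> ?s) (u, 0) = x0"
    proof (cases "u \<le> 1/3")
      case True then show ?thesis using u by (auto simp: H)
    next
      case False
      show ?thesis
      proof (cases "u \<le> 2/3")
        case True then show ?thesis using u False by (auto simp: H const_loop_def)
      next
        case F2: False
        then show ?thesis using u False by (auto simp: H)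
      qed
    qed
  qed
qed



lemma reduced_tl: "reduced (a # w) \<Longrightarrow> reduced w"
  by (cases w) auto

lemma red_cons_red: "reduced w \<Longrightarrow> reduced (red_cons a w)"
  by (cases w) (auto dest: reduced_tl)

lemma red_cons_set: "fst ` set (red_cons a w) \<subseteq> insert (fst a) (fst ` set w)"
  by (cases w) auto

lemma fg_mult_closed0:
  "fst ` set u \<subseteq> S \<Longrightarrow> v \<in> fg_carrier S \<Longrightarrow> foldr red_cons u v \<in> fg_carrier S"
proof (induction u)
  case Nil then show ?case by simp
next
  case (Cons a u)
  have u: "fst ` set u \<subseteq> S" "fst a \<in> S" using Cons.prems(1) by simp_all
  have IH: "foldr red_cons u v \<in> fg_carrier S" using Cons.IH u(1) Cons.prems(2) by blast
  have r: "reduced (foldr red_cons u v)" "fst ` set (foldr red_cons u v) \<subseteq> S"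
    using IH unfolding fg_carrier_def mem_Collect_eq by simp_all
  have r1: "reduced (red_cons a (foldr red_cons u v))" by (rule red_cons_red[OF r(1)])
  have r2: "fst ` set (red_cons a (foldr red_cons u v)) \<subseteq> S"
  proof -
    have "insert (fst a) (fst ` set (foldr red_cons u v)) \<subseteq> S" using r(2) u(2) by simp
    then show ?thesis by (rule order_trans[OF red_cons_set])
  qed
  have "foldr red_cons (a # u) v = red_cons a (foldr red_cons u v)" by simp
  then show ?case using r1 r2 unfolding fg_carrier_def mem_Collect_eq by simp
qed

lemma fg_mult_closed: "u \<in> fg_carrier S \<Longrightarrow> v \<in> fg_carrier S \<Longrightarrow> fg_mult u v \<in> fg_carrier S"
  unfolding fg_mult_def by (rule fg_mult_closed0) (auto simp: fg_carrier_def)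

lemma reduced_snoc:
  "reduced (w @ [a]) \<longleftrightarrow> reduced w \<and> (w \<noteq> [] \<longrightarrow> \<not> (fst (last w) = fst a \<and> snd (last w) \<noteq> snd a))"
  by (induction w rule: reduced.induct) auto

lemma reduced_inv: "reduced w \<Longrightarrow> reduced (rev (map (\<lambda>(x, b). (x, \<not> b)) w))"
proof (induction w rule: reduced.induct)
  case 1 then show ?case by simp
next
  case (2 a) then show ?case by (cases a) simp
next
  case (3 a b w)
  then have "reduced (rev (map (\<lambda>(x, b). (x, \<not> b)) (b # w)))" by simp
  moreover have "rev (map (\<lambda>(x, b). (x, \<not> b)) (a # b # w)) =
     rev (map (\<lambda>(x, b). (x, \<not> b)) (b # w)) @ [(\<lambda>(x, b). (x, \<not> b)) a]" by simp
  moreover have "last (rev (map (\<lambda>(x,b). (x,\<not>b)) (b#w))) = (\<lambda>(x, b). (x, \<not> b)) b" by simp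
  ultimately show ?case using "3.prems"
    by (cases a; cases b) (simp add: reduced_snoc del: rev.simps list.map)
qed

lemma fg_inv_closed: "u \<in> fg_carrier S \<Longrightarrow> fg_inv u \<in> fg_carrier S"
  unfolding fg_inv_def fg_carrier_def using reduced_inv by force

lemma gen_pre:
  assumes "generate_topology_on S V"
    and "\<And>s. s \<in> S \<Longrightarrow> openin A {x \<in> topspace A. f x \<in> s}"
  shows "openin A {x \<in> topspace A. f x \<in> V}"
  using assms(1)
proof (induction rule: generate_topology_on.induct)
  case Empty then show ?case by simp
next
  case (Int a b)
  have "{x \<in> topspace A. f x \<in> a \<inter> b} = {x \<in> topspace A. f x \<in> a} \<inter> {x \<in> topspace A. f x \<in> b}" by auto
  then show ?case using Int by auto
next
  case (UN K)
  have "{x \<in> topspace A. f x \<in> \<Union>K} = \<Union>((\<lambda>k. {x \<in> topspace A. f x \<in> k}) ` K)" by auto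
  then show ?case using UN by auto
next
  case (Basis s) then show ?case using assms(2) by auto
qed

lemma cont_gen:
  assumes "\<And>x. x \<in> topspace A \<Longrightarrow> f x \<in> \<Union>S"
    and "\<And>s. s \<in> S \<Longrightarrow> openin A {x \<in> topspace A. f x \<in> s}"
  shows "continuous_map A (topology_generated_by S) f"
  unfolding continuous_map_def
  using assms gen_pre openin_topology_generated_by by fastforce

lemma openin_quot:
  "openin (quotient_top T f Y) U \<longleftrightarrow> U \<subseteq> Y \<and> openin T {x \<in> topspace T. f x \<in> U}"
proof -
  have i1: "S \<inter> S' \<subseteq> Y \<and> openin T {x \<in> topspace T. f x \<in> S \<inter> S'}"
    if a: "S \<subseteq> Y \<and> openin T {x \<in> topspace T. f x \<in> S}"
          "S' \<subseteq> Y \<and> openin T {x \<in> topspace T. f x \<in> S'}" for S S'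
  proof -
    have "{x \<in> topspace T. f x \<in> S \<inter> S'} = {x \<in> topspace T. f x \<in> S} \<inter> {x \<in> topspace T. f x \<in> S'}" by auto
    then show ?thesis using a by auto
  qed
  have i2: "\<Union>K \<subseteq> Y \<and> openin T {x \<in> topspace T. f x \<in> \<Union>K}"
    if a: "\<forall>S\<in>K. S \<subseteq> Y \<and> openin T {x \<in> topspace T. f x \<in> S}" for K
  proof -
    have "{x \<in> topspace T. f x \<in> \<Union>K} = \<Union>((\<lambda>k. {x \<in> topspace T. f x \<in> k}) ` K)" by auto
    then show ?thesis using a by auto
  qed
  have "istopology (\<lambda>U. U \<subseteq> Y \<and> openin T {x \<in> topspace T. f x \<in> U})"
    unfolding istopology_def using i1 i2 by blast
  then show ?thesis unfolding quotient_top_def by (simp add: topology_inverse')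
qed

lemma topspace_quot:
  assumes "openin T {x \<in> topspace T. f x \<in> Y}"
  shows "topspace (quotient_top T f Y) = Y"
proof
  show "topspace (quotient_top T f Y) \<subseteq> Y"
    using openin_topspace[of "quotient_top T f Y"] unfolding openin_quot by blast
  have "openin (quotient_top T f Y) Y" using assms by (simp add: openin_quot)
  then show "Y \<subseteq> topspace (quotient_top T f Y)" by (rule openin_subset)
qed

lemma discrete_iff: "is_discrete T \<longleftrightarrow> (\<forall>U. U \<subseteq> topspace T \<longrightarrow> openin T U)"
  unfolding is_discrete_def topology_eq openin_discrete_topology
  using openin_subset by blast

lemma tau_main:
  fixes G :: "'g topology"
  assumes clos: "\<And>w. w \<in> fg_carrier (topspace G) \<Longrightarrow> word_eval mul iv one w \<in> topspace G"
    and unit: "\<And>x. x \<in> topspace G \<Longrightarrow> mul x one = x"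
  shows "is_discrete (tau_top G mul iv one) \<longleftrightarrow> is_discrete G"
proof -
  define C where "C = fg_carrier (topspace G)"
  define Fam where "Fam = \<Union>{{W. openin T W} | T. group_topology C fg_mult fg_inv T \<and>
                               continuous_map G T (\<lambda>x. [(x, True)])}"
  have M: "markov_topology G = topology_generated_by Fam"
    unfolding markov_topology_def Fam_def C_def ..
  have FamC: "W \<subseteq> C" if "W \<in> Fam" for W
    using that unfolding Fam_def group_topology_def by (auto dest: openin_subset)
  have sig: "[(x, True)] \<in> C" if "x \<in> topspace G" for x
    using that by (simp add: C_def fg_carrier_def)
  define I where "I = topology_generated_by {C}"
  have tI: "topspace I = C" by (simp add: I_def)
  have cI: "continuous_map A I f" if "\<And>x. x \<in> topspace A \<Longrightarrow> f x \<in> C" for A :: "'z topology" and f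
    unfolding I_def
  proof (rule cont_gen)
    fix s assume "s \<in> {C}"
    then have "{x \<in> topspace A. f x \<in> s} = topspace A" using that by auto
    then show "openin A {x \<in> topspace A. f x \<in> s}" by simp
  qed (use that in auto)
  have gI: "group_topology C fg_mult fg_inv I"
    unfolding group_topology_def
    by (auto simp: tI intro!: cI fg_mult_closed fg_inv_closed simp: C_def)
  have sI: "continuous_map G I (\<lambda>x. [(x, True)])"
    by (rule cI) (use sig in auto)
  have "C \<in> Fam" unfolding Fam_def using gI sI tI by blast
  then have tM: "topspace (markov_topology G) = C"
    using FamC unfolding M by auto
  have pre_all: "{w \<in> topspace (markov_topology G). word_eval mul iv one w \<in> topspace G} = topspace (markov_topology G)"
    using clos tM C_def by auto
  have tT: "topspace (tau_top G mul iv one) = topspace G"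
    unfolding tau_top_def by (rule topspace_quot) (simp only: pre_all openin_topspace)
  show ?thesis
  proof
    assume d: "is_discrete (tau_top G mul iv one)"
    show "is_discrete G"
      unfolding discrete_iff
    proof (intro allI impI)
      fix U assume U: "U \<subseteq> topspace G"
      then have "openin (tau_top G mul iv one) U" using d tT by (auto simp: discrete_iff)
      then have "openin (markov_topology G) {w \<in> topspace (markov_topology G). word_eval mul iv one w \<in> U}"
        unfolding tau_top_def openin_quot by auto
      then have g: "generate_topology_on Fam {w \<in> topspace (markov_topology G). word_eval mul iv one w \<in> U}"
        unfolding M by (rule openin_topology_generated_by)
      have "openin G {x \<in> topspace G. [(x, True)] \<in> {w \<in> topspace (markov_topology G). word_eval mul iv one w \<in> U}}"
      proof (rule gen_pre[OF g])
        fix s assume "s \<in> Fam"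
        then obtain T where "openin T s" "continuous_map G T (\<lambda>x. [(x, True)])"
          unfolding Fam_def by auto
        then show "openin G {x \<in> topspace G. [(x, True)] \<in> s}"
          using openin_continuous_map_preimage by blast
      qed
      moreover have "{x \<in> topspace G. [(x, True)] \<in> {w \<in> topspace (markov_topology G). word_eval mul iv one w \<in> U}} = U"
        using U sig unit by (auto simp: tM word_eval_def)
      ultimately show "openin G U" by simp
    qed
  next
    assume d: "is_discrete G"
    have D: "G = discrete_topology (topspace G)" using d by (simp add: is_discrete_def)
    have gD: "group_topology C fg_mult fg_inv (discrete_topology C)"
      unfolding group_topology_def
      by (auto simp flip: prod_topology_discrete_topology intro!: fg_mult_closed fg_inv_closed simp: C_def)
    have sD: "continuous_map G (discrete_topology C) (\<lambda>x. [(x, True)])"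
      by (subst D) (use sig in auto)
    have allM: "openin (markov_topology G) W" if "W \<subseteq> C" for W
    proof -
      have "W \<in> {W. openin (discrete_topology C) W}" using that by simp
      then have "W \<in> Fam" unfolding Fam_def using gD sD by blast
      then show ?thesis unfolding M by (rule topology_generated_by_Basis)
    qed
    show "is_discrete (tau_top G mul iv one)"
      unfolding discrete_iff tT
      by (auto simp: tau_top_def openin_quot tM intro!: allM)
  qed
qed



lemma class_eq:
  assumes "p \<in> loops X x0" "q \<in> loops X x0"
  shows "loop_class X x0 p = loop_class X x0 q \<longleftrightarrow> homotopic_rel_ends X x0 p q"
proof
  assume "loop_class X x0 p = loop_class X x0 q"
  moreover have "q \<in> loop_class X x0 q" using assms hom_refl by (auto simp: loop_class_def)
  ultimately show "homotopic_rel_ends X x0 p q" by (auto simp: loop_class_def)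
next
  assume h: "homotopic_rel_ends X x0 p q"
  show "loop_class X x0 p = loop_class X x0 q"
  proof (rule set_eqI)
    fix r
    have "homotopic_rel_ends X x0 q r \<Longrightarrow> homotopic_rel_ends X x0 p r" by (rule hom_trans[OF h])
    moreover have "homotopic_rel_ends X x0 p r \<Longrightarrow> homotopic_rel_ends X x0 q r" by (rule hom_trans[OF hom_sym[OF h]])
    ultimately show "r \<in> loop_class X x0 p \<longleftrightarrow> r \<in> loop_class X x0 q"
      unfolding loop_class_def by blast
  qed
qed

lemma ls_topspace: "topspace (loop_space X x0) = loops X x0"
proof -
  have "{g \<in> loops X x0. g ` {} \<subseteq> topspace X} \<in>
     {{g \<in> loops X x0. g ` K \<subseteq> U} | K U. compact K \<and> K \<subseteq> {0..1} \<and> openin X U}"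
    by blast
  then show ?thesis unfolding loop_space_def by auto
qed

lemma R_open:
  assumes d: "d \<in> loops X x0" and V: "openin (loop_space X x0) V"
  shows "openin (loop_space X x0) {g \<in> loops X x0. loop_join g d \<in> V}"
proof -
  let ?S = "{{g \<in> loops X x0. g ` K \<subseteq> U} | K U. compact K \<and> K \<subseteq> {0..1} \<and> openin X U}"
  have g: "generate_topology_on ?S V"
    using V unfolding loop_space_def by (rule openin_topology_generated_by)
  have "openin (loop_space X x0) {g \<in> topspace (loop_space X x0). loop_join g d \<in> V}"
  proof (rule gen_pre[OF g])
    fix s assume "s \<in> ?S"
    then obtain K U where s: "s = {g \<in> loops X x0. g ` K \<subseteq> U}" "compact K" "K \<subseteq> {0..1}" "openin X U"
      by blast
    define K1 where "K1 = (\<lambda>t. 2 * t) ` (K \<inter> {..1/2})"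
    define K2 where "K2 = (\<lambda>t. 2 * t - 1) ` (K \<inter> {t. \<not> t \<le> 1/2})"
    have cKh: "compact (K \<inter> {..1/2})" by (rule compact_Int_closed[OF s(2) closed_atMost])
    have ccont: "continuous_on (K \<inter> {..1/2}) (\<lambda>t::real. 2 * t)" by (intro continuous_intros)
    have cK1: "compact K1" unfolding K1_def by (rule compact_continuous_image[OF ccont cKh])
    have K1s: "K1 \<subseteq> {0..1}" using s(3) unfolding K1_def by auto
    have eq: "{g \<in> topspace (loop_space X x0). loop_join g d \<in> s} =
       (if d ` K2 \<subseteq> U then {g \<in> loops X x0. g ` K1 \<subseteq> U} else {})"
    proof -
      have "loop_join g d ` K \<subseteq> U \<longleftrightarrow> g ` K1 \<subseteq> U \<and> d ` K2 \<subseteq> U" for g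
        using s(3) unfolding K1_def K2_def loop_join_def by (auto simp: subset_iff)
      then show ?thesis using join_loops[OF _ d] by (auto simp: ls_topspace s(1))
    qed
    have "openin (loop_space X x0) {g \<in> loops X x0. g ` K1 \<subseteq> U}"
      unfolding loop_space_def
    proof (rule topology_generated_by_Basis)
      show "{g \<in> loops X x0. g ` K1 \<subseteq> U} \<in> ?S"
        unfolding mem_Collect_eq
        by (rule exI[of _ K1], rule exI[of _ U]) (simp add: cK1 K1s s(4))
    qed
    then show "openin (loop_space X x0) {g \<in> topspace (loop_space X x0). loop_join g d \<in> s}"
      unfolding eq by auto
  qed
  then show ?thesis by (simp add: ls_topspace)
qed

lemma carrier_some:
  assumes "A \<in> pi1_carrier X x0"
  obtains a where "a \<in> loops X x0" "A = loop_class X x0 a" "(SOME p. p \<in> A) \<in> loops X x0"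
    "homotopic_rel_ends X x0 a (SOME p. p \<in> A)"
proof -
  obtain a where a: "a \<in> loops X x0" "A = loop_class X x0 a" using assms by (auto simp: pi1_carrier_def)
  then have "a \<in> A" using hom_refl by (auto simp: loop_class_def)
  then have "(SOME p. p \<in> A) \<in> A" by (rule someI[where P="\<lambda>p. p \<in> A"])
  then show ?thesis using that a by (auto simp: loop_class_def)
qed

lemma qtop_topspace: "topspace (pi1_qtop X x0) = pi1_carrier X x0"
proof -
  have "{x \<in> topspace (loop_space X x0). loop_class X x0 x \<in> pi1_carrier X x0} = topspace (loop_space X x0)"
    by (auto simp: ls_topspace pi1_carrier_def)
  then show ?thesis unfolding pi1_qtop_def
    by (intro topspace_quot) (simp only: openin_topspace)
qed

lemma some_loop:
  assumes A: "A \<in> pi1_carrier X x0"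
  shows "(SOME p. p \<in> A) \<in> loops X x0"
proof -
  obtain a where "a \<in> loops X x0" "A = loop_class X x0 a" "(SOME p. p \<in> A) \<in> loops X x0"
    "homotopic_rel_ends X x0 a (SOME p. p \<in> A)" by (rule carrier_some[OF A])
  then show ?thesis by simp
qed

lemma mult_closed:
  assumes A: "A \<in> pi1_carrier X x0" and B: "B \<in> pi1_carrier X x0"
  shows "pi1_mult X x0 A B \<in> pi1_carrier X x0"
proof -
  have "loop_join (SOME p. p \<in> A) (SOME q. q \<in> B) \<in> loops X x0"
    by (rule join_loops[OF some_loop[OF A] some_loop[OF B]])
  then show ?thesis unfolding pi1_mult_def pi1_carrier_def by (rule imageI)
qed

lemma inv_closed:
  assumes A: "A \<in> pi1_carrier X x0"
  shows "pi1_inv X x0 A \<in> pi1_carrier X x0"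
proof -
  have "loop_rev (SOME p. p \<in> A) \<in> loops X x0"
    by (rule rev_loops[OF some_loop[OF A]])
  then show ?thesis unfolding pi1_inv_def pi1_carrier_def by (rule imageI)
qed

lemma one_closed:
  assumes x0: "x0 \<in> topspace X"
  shows "pi1_one X x0 \<in> pi1_carrier X x0"
  unfolding pi1_one_def pi1_carrier_def by (rule imageI[OF const_loops[OF x0]])

lemma word_closed:
  assumes x0: "x0 \<in> topspace X"
  shows "w \<in> fg_carrier (pi1_carrier X x0) \<Longrightarrow>
    word_eval (pi1_mult X x0) (pi1_inv X x0) (pi1_one X x0) w \<in> pi1_carrier X x0"
proof (induction w)
  case Nil then show ?case by (simp add: word_eval_def one_closed x0)
next
  case (Cons a w)
  obtain x b where a: "a = (x, b)" by (cases a)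
  have w: "w \<in> fg_carrier (pi1_carrier X x0)" using Cons.prems
    by (auto simp: fg_carrier_def dest: reduced_tl)
  have x: "x \<in> pi1_carrier X x0" using Cons.prems a by (auto simp: fg_carrier_def)
  have "word_eval (pi1_mult X x0) (pi1_inv X x0) (pi1_one X x0) (a # w) =
     pi1_mult X x0 (if b then x else pi1_inv X x0 x) (word_eval (pi1_mult X x0) (pi1_inv X x0) (pi1_one X x0) w)"
    by (simp add: word_eval_def a)
  then show ?case using Cons.IH[OF w] x by (cases b) (simp_all add: mult_closed inv_closed)
qed

lemma unit_law:
  assumes x0: "x0 \<in> topspace X" and A: "A \<in> pi1_carrier X x0"
  shows "pi1_mult X x0 A (pi1_one X x0) = A"
proof -
  obtain a where a: "a \<in> loops X x0" "A = loop_class X x0 a" "(SOME p. p \<in> A) \<in> loops X x0"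
    "homotopic_rel_ends X x0 a (SOME p. p \<in> A)" using carrier_some[OF A] by blast
  obtain c where c: "c \<in> loops X x0" "pi1_one X x0 = loop_class X x0 c" "(SOME p. p \<in> pi1_one X x0) \<in> loops X x0"
    "homotopic_rel_ends X x0 c (SOME p. p \<in> pi1_one X x0)" using carrier_some[OF one_closed[OF x0]] by blast
  let ?p = "SOME p. p \<in> A" and ?q = "SOME p. p \<in> pi1_one X x0"
  have cc: "homotopic_rel_ends X x0 c (const_loop x0)"
    using c(2) class_eq[OF c(1) const_loops[OF x0]] by (simp add: pi1_one_def)
  have h1: "homotopic_rel_ends X x0 (loop_join ?p ?q) (loop_join ?p (const_loop x0))"
    by (intro join_hom hom_refl a(3) hom_trans[OF hom_sym[OF c(4)] cc])
  have h0: "homotopic_rel_ends X x0 (loop_join ?p ?q) ?p"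
    by (rule hom_trans[OF h1 right_unit[OF a(3)]])
  have h: "homotopic_rel_ends X x0 (loop_join ?p ?q) a"
    by (rule hom_trans[OF h0 hom_sym[OF a(4)]])
  show ?thesis
    unfolding pi1_mult_def a(2)[symmetric]
    using class_eq[OF join_loops[OF a(3) c(3)] a(1)] h a(2) by simp
qed

theorem proposition3p16:
  fixes X :: "'a topology" and x0 :: 'a
  assumes "path_connected_space X" and "x0 \<in> topspace X"
  shows "(is_discrete (pi1_tau X x0) \<longleftrightarrow> is_discrete (pi1_qtop X x0)) \<and>
         (is_discrete (pi1_qtop X x0) \<longleftrightarrow>
            (\<forall>\<alpha> \<in> loops X x0. homotopic_rel_ends X x0 \<alpha> (const_loop x0) \<longrightarrow>
               (\<exists>U. openin (loop_space X x0) U \<and> \<alpha> \<in> U \<and>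
                    (\<forall>\<beta> \<in> U. homotopic_rel_ends X x0 \<beta> (const_loop x0)))))"
proof (intro conjI)
  note x0 = assms(2)
  show "is_discrete (pi1_tau X x0) \<longleftrightarrow> is_discrete (pi1_qtop X x0)"
    unfolding pi1_tau_def
    by (rule tau_main) (simp_all add: qtop_topspace word_closed[OF x0] unit_law[OF x0])
  have cl: "const_loop x0 \<in> loops X x0" by (rule const_loops[OF x0])
  show "is_discrete (pi1_qtop X x0) \<longleftrightarrow>
            (\<forall>\<alpha> \<in> loops X x0. homotopic_rel_ends X x0 \<alpha> (const_loop x0) \<longrightarrow>
               (\<exists>U. openin (loop_space X x0) U \<and> \<alpha> \<in> U \<and>
                    (\<forall>\<beta> \<in> U. homotopic_rel_ends X x0 \<beta> (const_loop x0))))"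
  proof (intro iffI ballI impI)
    fix \<alpha> assume d: "is_discrete (pi1_qtop X x0)" and al: "\<alpha> \<in> loops X x0"
      and ah: "homotopic_rel_ends X x0 \<alpha> (const_loop x0)"
    have "openin (pi1_qtop X x0) {pi1_one X x0}"
      using d[unfolded discrete_iff qtop_topspace, rule_format, of "{pi1_one X x0}"] one_closed[OF x0] by simp
    then have o: "openin (loop_space X x0) {x \<in> loops X x0. loop_class X x0 x \<in> {pi1_one X x0}}"
      unfolding pi1_qtop_def openin_quot ls_topspace by auto
    show "\<exists>U. openin (loop_space X x0) U \<and> \<alpha> \<in> U \<and>
                    (\<forall>\<beta> \<in> U. homotopic_rel_ends X x0 \<beta> (const_loop x0))"
    proof (intro exI conjI ballI)
      show "openin (loop_space X x0) {x \<in> loops X x0. loop_class X x0 x \<in> {pi1_one X x0}}" by (rule o)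
      show "\<alpha> \<in> {x \<in> loops X x0. loop_class X x0 x \<in> {pi1_one X x0}}"
        using al ah class_eq[OF al cl] by (simp add: pi1_one_def)
      fix \<beta> assume "\<beta> \<in> {x \<in> loops X x0. loop_class X x0 x \<in> {pi1_one X x0}}"
      then show "homotopic_rel_ends X x0 \<beta> (const_loop x0)"
        using class_eq[OF _ cl, of \<beta>] by (simp add: pi1_one_def)
    qed
  next
    assume H: "\<forall>\<alpha> \<in> loops X x0. homotopic_rel_ends X x0 \<alpha> (const_loop x0) \<longrightarrow>
               (\<exists>U. openin (loop_space X x0) U \<and> \<alpha> \<in> U \<and>
                    (\<forall>\<beta> \<in> U. homotopic_rel_ends X x0 \<beta> (const_loop x0)))"
    show "is_discrete (pi1_qtop X x0)"
      unfolding discrete_iff qtop_topspace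
    proof (intro allI impI)
      fix U assume U: "U \<subseteq> pi1_carrier X x0"
      have "openin (loop_space X x0) {x \<in> loops X x0. loop_class X x0 x \<in> U}"
      proof (subst openin_subopen, intro ballI)
        fix x assume x: "x \<in> {x \<in> loops X x0. loop_class X x0 x \<in> U}"
        then have xl: "x \<in> loops X x0" by simp
        have rl: "loop_rev x \<in> loops X x0" by (rule rev_loops[OF xl])
        obtain V where V: "openin (loop_space X x0) V" "loop_join x (loop_rev x) \<in> V"
          "\<forall>\<beta> \<in> V. homotopic_rel_ends X x0 \<beta> (const_loop x0)"
          using H[rule_format, OF join_loops[OF xl rl] right_inv[OF xl]] by blast
        show "\<exists>T. openin (loop_space X x0) T \<and> x \<in> T \<and> T \<subseteq> {x \<in> loops X x0. loop_class X x0 x \<in> U}"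
        proof (intro exI conjI)
          show "openin (loop_space X x0) {g \<in> loops X x0. loop_join g (loop_rev x) \<in> V}"
            by (rule R_open[OF rl V(1)])
          show "x \<in> {g \<in> loops X x0. loop_join g (loop_rev x) \<in> V}" using xl V(2) by simp
          show "{g \<in> loops X x0. loop_join g (loop_rev x) \<in> V} \<subseteq> {x \<in> loops X x0. loop_class X x0 x \<in> U}"
          proof
            fix g assume g: "g \<in> {g \<in> loops X x0. loop_join g (loop_rev x) \<in> V}"
            then have "homotopic_rel_ends X x0 g x"
              by (intro cancel_hom[OF _ xl]) (use g V(3) in auto)
            then have "loop_class X x0 g = loop_class X x0 x" using class_eq[OF _ xl, of g] g by simp
            then show "g \<in> {x \<in> loops X x0. loop_class X x0 x \<in> U}" using g x by simp
          qed
        qed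
      qed
      then show "openin (pi1_qtop X x0) U"
        unfolding pi1_qtop_def openin_quot ls_topspace using U by simp
    qed
  qed
qed


end
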